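(* Assume (A1)–(A5). Let $v$ be a viscosity supersolution of (Q) satisfying $|v(t,x)|\le C(1+|x|^{2\varrho})$ for all $(t,x)\in[0,T]\times\mathbb R^d$, for some $C,\varrho>0$. Then there is $\varpi_0>0$ such that for every $\varpi>\varpi_0$ and $\theta>0$ the function $$w(t,x):=v(t,x)+\theta e^{-\varpi t}\big(1+((|x|-K_{\gamma,\xi})^+)^{2\varrho+2}\big)$$ is also a viscosity supersolution of (Q).
   Context: $T>0$, $d\ge1$; $E\subset\mathbb R^d$ compact; $U$ compact subset of a Euclidean space. (A1) $\xi:[0,T]\times\mathbb R^d\times U\to\mathbb R^d$, $\gamma:[0,T]\times\mathbb R^d\times E\to\mathbb R^d$ jointly continuous with $|x+\xi(t,x,b)|\vee|x+\gamma(t,x,e)|\le K_{\gamma,\xi}\vee|x|$ for a constant $K_{\gamma,\xi}>0$; $\gamma$ Lipschitz in $x$. (A2) $a:[0,T]\times\mathbb R^d\to\mathbb R^d$, $\sigma:[0,T]\times\mathbb R^d\to\mathbb R^{d\times d}$ with $|a|+|\sigma|\le C(1+|x|)$, Lipschitz in $x$ uniformly in $t$. (A3) $f:[0,T]\times\mathbb R^d\times\mathbb R\times\mathbb R^d\to\mathbb R$ continuous in $(t,x)$ uniformly in $(y,z)$, $|f(t,x,0,0)|\le C(1+|x|^\rho)$, $|f(t,x,y,z)-f(t,x,y',z')|\le k_f(|y-y'|+|z-z'|)$. (A4) $\psi$ continuous with polynomial growth, $\sup_b\{\psi(x+\xi(T,x,b))-\ell(T,x,b)\}\le\psi(x)\le\inf_e\{\psi(x+\gamma(T,x,e))+\chi(T,x,e)\}$.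 (A5) $\ell\ge\delta>0$, $\chi\ge0$ jointly continuous, polynomial growth. QVI (Q): for locally bounded $w$ and $t<T$, $\mathcal Mw(t,x)=\sup_{b\in U}\{w(t,x+\xi(t,x,b))-\ell(t,x,b)\}$, $\mathcal Hw(t,x)=\inf_{e\in E}\{w(t,x+\gamma(t,x,e))+\chi(t,x,e)\}$, with $\mathcal Mw(T,x)=\mathcal Hw(T,x)=w(T,x)$; $\mathcal L\varphi=\sum_ja_j\partial_{x_j}\varphi+\frac12\sum_{i,j}(\sigma\sigma^\top)_{ij}\partial^2_{x_ix_j}\varphi$; (Q) is $\min\{v-\mathcal Mv,\max\{v-\mathcal Hv,-\partial_tv-\mathcal Lv-f(t,x,v,\sigma^\top\nabla_xv)\}\}=0$ on $[0,T)\times\mathbb R^d$, $v(T,\cdot)=\psi$. A viscosity supersolution of (Q) is a locally bounded lsc $w$ with $w(T,x)\ge\psi(x)$ such that for all $(t,x)\in[0,T)\times\mathbb R^d$ and all $(p,q,M)$ in the limiting parabolic subjet $\bar J^-w(t,x)$ (limits of $(p_n,q_n,M_n)$ satisfying $w(t',x')\ge w(t_n,x_n)+p_n(t'-t_n)+\langle q_n,x'-x_n\rangle+\frac12\langle x'-x_n,M_n(x'-x_n)\rangle+o(|t'-t_n|+|x'-x_n|^2)$ with $(t_n,x_n,w(t_n,x_n))\to(t,x,w(t,x))$), $\min\{w(t,x)-\mathcal Mw(t,x),\max\{w(t,x)-\mathcal Hw(t,x),-p-q^\top a(t,x)-\frac12\mathrm{tr}(\sigma\sigma^\top(t,x)M)-f(t,x,w(t,x),\sigma^\top(t,x)q)\}\}\ge0$.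 (Equivalently, via $C^{1,2}$ test functions touching from below.) *)

theory Defs
  imports "HOL-Analysis.Analysis" "HOL-Library.Extended_Real"
begin

definition pdom :: "real \<Rightarrow> (real \<times> (real^'d)) set" where
  "pdom T = {0..T} \<times> UNIV"

definition locally_bounded_on :: "real \<Rightarrow> (real \<Rightarrow> real^'d \<Rightarrow> real) \<Rightarrow> bool" where
  "locally_bounded_on T w \<longleftrightarrow>
     (\<forall>(t,x)\<in>pdom T. \<exists>r>0. \<exists>B. \<forall>(s,y)\<in>pdom T.
         dist (s,y) (t,x) < r \<longrightarrow> \<bar>w s y\<bar> \<le> B)"

definition lsc_on :: "real \<Rightarrow> (real \<Rightarrow> real^'d \<Rightarrow> real) \<Rightarrow> bool" where
  "lsc_on T w \<longleftrightarrow>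
     (\<forall>(t,x)\<in>pdom T. \<forall>\<epsilon>>0. \<exists>r>0. \<forall>(s,y)\<in>pdom T.
         dist (s,y) (t,x) < r \<longrightarrow> w t x - \<epsilon> < w s y)"

definition subjet :: "real \<Rightarrow> (real \<Rightarrow> real^'d \<Rightarrow> real) \<Rightarrow> real \<Rightarrow> real^'d
                       \<Rightarrow> (real \<times> (real^'d) \<times> (real^'d^'d)) set" where
  "subjet T w t x = {(p,q,M). \<forall>\<epsilon>>0. \<exists>r>0. \<forall>(s,y)\<in>pdom T.
      \<bar>s - t\<bar> + norm (y - x) < r \<longrightarrow>
        w s y \<ge> w t x + p * (s - t) + q \<bullet> (y - x) + (1/2) * ((y - x) \<bullet> (M *v (y - x)))
                 - \<epsilon> * (\<bar>s - t\<bar> + (norm (y - x))\<^sup>2)}"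

definition limsubjet :: "real \<Rightarrow> (real \<Rightarrow> real^'d \<Rightarrow> real) \<Rightarrow> real \<Rightarrow> real^'d
                       \<Rightarrow> (real \<times> (real^'d) \<times> (real^'d^'d)) set" where
  "limsubjet T w t x = {(p,q,M). \<exists>tn xn pn qn Mn.
      (\<forall>n. (tn n, xn n) \<in> pdom T \<and> (pn n, qn n, Mn n) \<in> subjet T w (tn n) (xn n)) \<and>
      tn \<longlonglongrightarrow> t \<and> xn \<longlonglongrightarrow> x \<and> (\<lambda>n. w (tn n) (xn n)) \<longlonglongrightarrow> w t x \<and>
      pn \<longlonglongrightarrow> p \<and> qn \<longlonglongrightarrow> q \<and> Mn \<longlonglongrightarrow> M}"

text \<open>Intervention operators (extended-real valued: sup over the empty set is -\<infinity>,
  inf over the empty set is +\<infinity>); at t = T they equal w(T,x).\<close>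
definition Mop :: "real \<Rightarrow> 'u set \<Rightarrow> (real \<Rightarrow> real^'d \<Rightarrow> 'u \<Rightarrow> real^'d)
                    \<Rightarrow> (real \<Rightarrow> real^'d \<Rightarrow> 'u \<Rightarrow> real)
                    \<Rightarrow> (real \<Rightarrow> real^'d \<Rightarrow> real) \<Rightarrow> real \<Rightarrow> real^'d \<Rightarrow> ereal" where
  "Mop T U \<xi> ell w t x =
     (if t = T then ereal (w t x)
      else (SUP b\<in>U. ereal (w t (x + \<xi> t x b) - ell t x b)))"

definition Hop :: "real \<Rightarrow> (real^'d) set \<Rightarrow> (real \<Rightarrow> real^'d \<Rightarrow> real^'d \<Rightarrow> real^'d)
                    \<Rightarrow> (real \<Rightarrow> real^'d \<Rightarrow> real^'d \<Rightarrow> real)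
                    \<Rightarrow> (real \<Rightarrow> real^'d \<Rightarrow> real) \<Rightarrow> real \<Rightarrow> real^'d \<Rightarrow> ereal" where
  "Hop T E \<gamma> chi w t x =
     (if t = T then ereal (w t x)
      else (INF e\<in>E. ereal (w t (x + \<gamma> t x e) + chi t x e)))"

definition visc_supersol ::
  "real \<Rightarrow> 'u set \<Rightarrow> (real^'d) set
   \<Rightarrow> (real \<Rightarrow> real^'d \<Rightarrow> 'u \<Rightarrow> real^'d) \<Rightarrow> (real \<Rightarrow> real^'d \<Rightarrow> real^'d \<Rightarrow> real^'d)
   \<Rightarrow> (real \<Rightarrow> real^'d \<Rightarrow> real^'d) \<Rightarrow> (real \<Rightarrow> real^'d \<Rightarrow> real^'d^'d)
   \<Rightarrow> (real \<Rightarrow> real^'d \<Rightarrow> real \<Rightarrow> real^'d \<Rightarrow> real) \<Rightarrow> (real^'d \<Rightarrow> real)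
   \<Rightarrow> (real \<Rightarrow> real^'d \<Rightarrow> 'u \<Rightarrow> real) \<Rightarrow> (real \<Rightarrow> real^'d \<Rightarrow> real^'d \<Rightarrow> real)
   \<Rightarrow> (real \<Rightarrow> real^'d \<Rightarrow> real) \<Rightarrow> bool" where
  "visc_supersol T U E \<xi> \<gamma> a \<sigma> f \<psi> ell chi w \<longleftrightarrow>
     locally_bounded_on T w \<and> lsc_on T w \<and> (\<forall>x. w T x \<ge> \<psi> x) \<and>
     (\<forall>t x p q M. 0 \<le> t \<and> t < T \<and> (p,q,M) \<in> limsubjet T w t x \<longrightarrow>
        min (ereal (w t x) - Mop T U \<xi> ell w t x)
            (max (ereal (w t x) - Hop T E \<gamma> chi w t x)
                 (ereal (- p - q \<bullet> a t x
                         - (1/2) * trace (\<sigma> t x ** transpose (\<sigma> t x) ** M)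
                         - f t x (w t x) (transpose (\<sigma> t x) *v q)))) \<ge> 0)"

end

theory Submission
  imports Defs
begin

lemma taylor_powr:
  fixes m r z :: real
  assumes m: "m > 2" and r: "r > 0" and z: "z > 0"
  shows "z powr m \<le> r powr m + m * r powr (m-1) * (z - r)
           + (m*(m-1)/2) * (max r z) powr (m-2) * (z - r)^2"
proof (cases "z = r")
  case True then show ?thesis by simp
next
  case False
  define diff where "diff = (\<lambda>n::nat. if n = 0 then (\<lambda>z. z powr m) else if n = 1 then (\<lambda>z. m * z powr (m-1))
      else (\<lambda>z. m*(m-1) * z powr (m-2)))"
  have D: "\<forall>(k::nat) t. k < 2 \<and> min r z \<le> t \<and> t \<le> max r z \<longrightarrow> DERIV (diff k) t :> diff (Suc k) t"
  proof (intro allI impI)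
    fix k :: nat and t :: real assume h: "k < 2 \<and> min r z \<le> t \<and> t \<le> max r z"
    then have t: "t > 0" using r z by linarith
    show "DERIV (diff k) t :> diff (Suc k) t"
    proof (cases "k = 0")
      case True then show ?thesis using has_real_derivative_powr[OF t, of m] by (simp add: diff_def)
    next
      case False then have "k = 1" using h by auto
      then show ?thesis using DERIV_cmult[OF has_real_derivative_powr[OF t, of "m-1"], of m]
        by (simp add: diff_def algebra_simps)
    qed
  qed
  obtain t where t: "(if z < r then z < t \<and> t < r else r < t \<and> t < z)"
     and eq: "diff 0 z = (\<Sum>k<2. (diff k r / fact k) * (z - r)^k) + (diff 2 t / fact 2) * (z - r)^2"
    using Taylor[of 2 diff "diff 0" "min r z" "max r z" r z] D False by auto
  have tpos: "t > 0" "t \<le> max r z" using t r z by (auto split: if_splits)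
  have "t powr (m-2) \<le> (max r z) powr (m-2)"
    using tpos m by (intro powr_mono2) auto
  then have "m*(m-1) * t powr (m-2) \<le> m*(m-1) * (max r z) powr (m-2)"
    using m by (intro mult_left_mono) auto
  then have "(m*(m-1) * t powr (m-2)) / 2 * (z-r)^2 \<le> (m*(m-1)/2) * (max r z) powr (m-2) * (z - r)^2"
    by (intro mult_right_mono) auto
  moreover have "(\<Sum>k<2. (diff k r / fact k) * (z - r)^k) = r powr m + m * r powr (m-1) * (z - r)"
    by (simp add: diff_def numeral_2_eq_2)
  ultimately show ?thesis using eq by (simp add: diff_def)
qed

definition rK :: "real \<Rightarrow> real^'d \<Rightarrow> real" where "rK K x = max (norm x - K) 0"
definition hK :: "real \<Rightarrow> real \<Rightarrow> real^'d \<Rightarrow> real" where "hK K m x = rK K x powr m"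
definition qK :: "real \<Rightarrow> real \<Rightarrow> real^'d \<Rightarrow> real^'d" where
  "qK K m x = (m * rK K x powr (m-1) / max (norm x) (K/2)) *\<^sub>R x"
definition LK :: "real \<Rightarrow> real \<Rightarrow> real^'d \<Rightarrow> real" where
  "LK K m x = 2*m^2 * (rK K x + 1) powr (m-2)"

lemma hK_taylor:
  fixes x :: "real^'d"
  assumes K: "K > 0" and m: "m > 2"
  shows "\<exists>\<delta>>0. \<forall>y. norm (y - x) < \<delta> \<longrightarrow>
           hK K m y \<le> hK K m x + qK K m x \<bullet> (y - x) + LK K m x * (norm (y - x))^2"
proof (cases "norm x \<le> K")
  case True
  have L1: "LK K m x \<ge> 1"
  proof -
    have "(rK K x + 1) powr (m-2) \<ge> 1" using m by (intro ge_one_powr_ge_zero) (auto simp: rK_def)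
    moreover have "2*m^2 \<ge> 1"
    proof -
      have "2*2 \<le> m*m" using m by (intro mult_mono) auto
      then show ?thesis by (simp add: power2_eq_square)
    qed
    ultimately have "1*1 \<le> 2*m^2 * (rK K x + 1) powr (m-2)" by (intro mult_mono) auto
    then show ?thesis unfolding LK_def by simp
  qed
  have rx: "rK K x = 0" using True by (simp add: rK_def)
  show ?thesis
  proof (intro exI[of _ 1] conjI allI impI)
    show "(0::real) < 1" by simp
    fix y :: "real^'d" assume y: "norm (y - x) < 1"
    have "norm y - K \<le> norm (y - x)" using True norm_triangle_ineq2[of y x] by linarith
    then have r1: "rK K y \<le> norm (y - x)" by (simp add: rK_def)
    have "hK K m y \<le> norm (y - x) powr m" unfolding hK_def
      using r1 m by (intro powr_mono2) (auto simp: rK_def)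
    also have "\<dots> \<le> norm (y - x) powr 2"
      using y m by (intro powr_mono') auto
    also have "\<dots> = (norm (y - x))^2" by (simp add: powr_numeral)
    also have "\<dots> \<le> LK K m x * (norm (y - x))^2" using L1 by (simp add: mult_le_cancel_right1)
    finally show "hK K m y \<le> hK K m x + qK K m x \<bullet> (y - x) + LK K m x * (norm (y - x))^2"
      using rx m by (simp add: hK_def qK_def)
  qed
next
  case False
  define n where "n = norm x"
  define r where "r = n - K"
  have r: "r > 0" and rr: "rK K x = r" and nr: "r \<le> n" using False K by (auto simp: r_def n_def rK_def)
  have mxn: "max (norm x) (K/2) = n" using False K n_def by auto
  show ?thesis
  proof (intro exI[of _ "min (1/2) (r/4)"] conjI allI impI)
    show "min (1/2) (r/4) > 0" using r by auto
    fix y :: "real^'d" assume y: "norm (y - x) < min (1/2) (r/4)"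
    define e where "e = y - x"
    have e1: "norm e < 1/2" and e2: "norm e < r/4" using y e_def by auto
    have npos: "n > 0" using r nr by linarith
    define d where "d = (x \<bullet> e)/n + (norm e)^2/(2*n)"
    have xe: "\<bar>x \<bullet> e\<bar> \<le> n * norm e" using Cauchy_Schwarz_ineq2[of x e] n_def by simp
    have d1: "\<bar>(x \<bullet> e)/n\<bar> \<le> norm e" using xe npos by (simp add: abs_div pos_divide_le_eq mult.commute)
    have d2: "(norm e)^2/(2*n) \<le> norm e / 2"
    proof -
      have "norm e \<le> n" using e2 nr r by linarith
      then have "(norm e)^2 \<le> norm e * n" by (simp add: power2_eq_square mult_left_mono)
      then show ?thesis using npos by (simp add: field_simps)
    qed
    have d3: "(norm e)^2/(2*n) \<ge> 0" using npos by simp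
    have dabs: "\<bar>d\<bar> \<le> 3/2 * norm e" using d1 d2 d3 unfolding d_def by linarith
    have nd: "n + d \<ge> 0" using dabs e2 nr by linarith
    have "(norm y)^2 = n^2 + 2*(x \<bullet> e) + (norm e)^2"
      unfolding e_def n_def
      by (simp add: power2_norm_eq_inner inner_diff_left inner_diff_right inner_commute algebra_simps)
    also have "\<dots> \<le> (n + d)^2"
    proof -
      have "(n+d)^2 = n^2 + 2*n*d + d^2" by (simp add: power2_eq_square algebra_simps)
      moreover have "2*n*d = 2*(x \<bullet> e) + (norm e)^2" using npos unfolding d_def by (simp add: field_simps)
      ultimately show ?thesis by simp
    qed
    finally have ny: "norm y \<le> n + d" using nd by (meson abs_le_square_iff abs_of_nonneg norm_ge_zero power2_le_imp_le)
    have rd: "r + d > 0" using dabs e2 by linarith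
    have "rK K y \<le> r + d" using ny rd unfolding rK_def r_def by linarith
    then have "hK K m y \<le> (r + d) powr m" unfolding hK_def using m by (intro powr_mono2) (auto simp: rK_def)
    also have "\<dots> \<le> r powr m + m * r powr (m-1) * d + (m*(m-1)/2) * (max r (r+d)) powr (m-2) * d^2"
      using taylor_powr[OF m r rd] by simp
    also have "\<dots> \<le> hK K m x + qK K m x \<bullet> e + LK K m x * (norm e)^2"
    proof -
      have q: "qK K m x \<bullet> e = m * r powr (m-1) * ((x \<bullet> e)/n)"
        unfolding qK_def rr mxn by (simp add: field_simps)
      have lin: "m * r powr (m-1) * d = qK K m x \<bullet> e + m * r powr (m-1) * ((norm e)^2/(2*n))"
        unfolding q d_def by (simp add: algebra_simps)
      have pr: "r powr (m-1) = r powr (m-2) * r"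
      proof -
        have "r powr (m-1) = r powr ((m-2) + 1)" by simp
        also have "\<dots> = r powr (m-2) * r powr 1" by (rule powr_add)
        finally show ?thesis using r by simp
      qed
      have "r powr (m-1) / n \<le> r powr (m-2)"
      proof -
        have "r powr (m-2) * r \<le> r powr (m-2) * n" using nr by (intro mult_left_mono) auto
        then show ?thesis using pr npos by (simp add: divide_le_eq)
      qed
      then have "r powr (m-1) / n * (m/2 * (norm e)^2) \<le> r powr (m-2) * (m/2 * (norm e)^2)"
        using m by (intro mult_right_mono) auto
      then have "m * r powr (m-1) * ((norm e)^2/(2*n)) \<le> m/2 * r powr (m-2) * (norm e)^2"
        by (simp add: field_simps)
      moreover have "r powr (m-2) \<le> (r+1) powr (m-2)" using r m by (intro powr_mono2) auto
      moreover have "(max r (r+d)) powr (m-2) \<le> (r+1) powr (m-2)"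
        using r m dabs e1 by (intro powr_mono2) auto
      moreover have "d^2 \<le> 9/4 * (norm e)^2"
      proof -
        have "d^2 \<le> (3/2 * norm e)^2" using dabs by (metis abs_le_square_iff abs_of_nonneg norm_ge_zero mult_nonneg_nonneg zero_le_divide_iff zero_le_numeral)
        then show ?thesis by (simp add: power2_eq_square field_simps)
      qed
      moreover have "(r+1) powr (m-2) \<ge> 0" by simp
      ultimately have quad: "m * r powr (m-1) * ((norm e)^2/(2*n)) + (m*(m-1)/2) * (max r (r+d)) powr (m-2) * d^2
          \<le> 2*m^2 * (r + 1) powr (m-2) * (norm e)^2"
      proof -
        assume a1: "m * r powr (m-1) * ((norm e)^2/(2*n)) \<le> m/2 * r powr (m-2) * (norm e)^2"
          and a2: "r powr (m-2) \<le> (r+1) powr (m-2)"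
          and a3: "(max r (r+d)) powr (m-2) \<le> (r+1) powr (m-2)"
          and a4: "d^2 \<le> 9/4 * (norm e)^2" and a5: "(r+1) powr (m-2) \<ge> 0"
        define P where "P = (r+1) powr (m-2)"
        define E where "E = (norm e)^2"
        have E0: "E \<ge> 0" by (simp add: E_def)
        have b1: "m/2 * r powr (m-2) * E \<le> m/2 * P * E" using a2 m E0 unfolding P_def
          by (intro mult_right_mono mult_left_mono) auto
        have b2: "(m*(m-1)/2) * (max r (r+d)) powr (m-2) * d^2 \<le> (m*(m-1)/2) * P * (9/4 * E)"
          using a3 a4 m a5 unfolding P_def E_def
          by (intro mult_mono mult_left_mono) auto
        have b3: "m/2 * P * E + (m*(m-1)/2) * P * (9/4 * E) \<le> 2*m^2 * P * E"
        proof -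
          have mm: "0 \<le> m*m" by simp
          have "m/2 + (m*(m-1)/2) * (9/4) \<le> 2*m^2" 
          proof -
            have "m/2 + (m*(m-1)/2) * (9/4) = 9/8*(m*m) - 5/8*m" by (simp add: field_simps)
            then show ?thesis using m mm unfolding power2_eq_square by linarith
          qed
          then have "(m/2 + (m*(m-1)/2) * (9/4)) * (P*E) \<le> 2*m^2 * (P*E)"
            using a5 E0 unfolding P_def by (intro mult_right_mono) auto
          then show ?thesis by (simp add: algebra_simps)
        qed
        show ?thesis using a1 b1 b2 b3 unfolding P_def E_def by linarith
      qed
      show ?thesis using lin quad unfolding hK_def LK_def rr by linarith
    qed
    finally show "hK K m y \<le> hK K m x + qK K m x \<bullet> (y - x) + LK K m x * (norm (y - x))^2"
      unfolding e_def .
  qed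
qed

lemma trace_AAt: "trace ((A::real^'n^'n) ** transpose A) = (norm A)^2"
proof -
  have "(norm A)^2 = (\<Sum>i\<in>UNIV. \<Sum>k\<in>UNIV. A$i$k * A$i$k)"
    by (simp add: power2_norm_eq_inner inner_vec_def)
  moreover have "trace (A ** transpose A) = (\<Sum>i\<in>UNIV. \<Sum>k\<in>UNIV. A$i$k * A$i$k)"
    by (simp add: trace_def matrix_matrix_mult_def transpose_def)
  ultimately show ?thesis by simp
qed

lemma norm_transpose_mat: "norm (transpose (A::real^'n^'n)) = norm A"
proof -
  have "(norm (transpose A))^2 = (norm A)^2"
    by (metis trace_AAt trace_mul_sym transpose_transpose)
  then show ?thesis by (simp add: power2_eq_iff_nonneg)
qed

lemma norm_mat_vec: "norm ((A::real^'n^'m) *v v) \<le> norm A * norm v"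
proof -
  have "(norm (A *v v))^2 = (\<Sum>i\<in>UNIV. ((A *v v)$i)^2)"
    unfolding power2_norm_eq_inner by (simp add: inner_vec_def power2_eq_square)
  also have "\<dots> \<le> (\<Sum>i\<in>UNIV. (norm (A$i))^2 * (norm v)^2)"
  proof (intro sum_mono)
    fix i
    have "\<bar>(A *v v)$i\<bar> \<le> norm (A$i) * norm v"
      unfolding matrix_vector_mul_component by (rule Cauchy_Schwarz_ineq2)
    then have "\<bar>(A *v v)$i\<bar>^2 \<le> (norm (A$i) * norm v)^2"
      by (intro power_mono) auto
    then show "((A *v v)$i)^2 \<le> (norm (A$i))^2 * (norm v)^2" by (simp add: power_mult_distrib)
  qed
  also have "\<dots> = (norm A)^2 * (norm v)^2"
  proof -
    have "(norm A)^2 = (\<Sum>i\<in>UNIV. (norm (A$i))^2)"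
      by (simp add: power2_norm_eq_inner inner_vec_def)
    then show ?thesis by (simp add: sum_distrib_right)
  qed
  also have "\<dots> = (norm A * norm v)^2" by (simp add: power_mult_distrib)
  finally show ?thesis by (rule power2_le_imp_le) simp
qed

lemma trace_shift: "trace ((X::real^'n^'n) ** (M + c *\<^sub>R mat 1)) = trace (X ** M) + c * trace X"
proof -
  have "trace (X ** (c *\<^sub>R mat 1)) = c * trace X"
    by (simp add: matrix_scalar_ac trace_def sum_distrib_left)
  then show ?thesis by (simp add: matrix_add_ldistrib trace_add)
qed

lemma quad_shift: "(e::real^'n) \<bullet> ((M + c *\<^sub>R mat 1) *v e) = e \<bullet> (M *v e) + c * (norm e)^2"
  by (simp add: matrix_vector_mult_add_rdistrib scaleR_matrix_vector_assoc[symmetric]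
                inner_add_right power2_norm_eq_inner)

lemma cont_rK: "continuous_on UNIV (rK K :: real^'d \<Rightarrow> real)"
  unfolding rK_def by (intro continuous_intros)

lemma cont_hK: assumes "m > 0" shows "continuous_on UNIV (hK K m :: real^'d \<Rightarrow> real)"
  unfolding hK_def using assms
  by (intro continuous_on_powr' cont_rK continuous_on_const) (auto simp: rK_def)

lemma cont_qK: assumes "m > 1" "K > 0" shows "continuous_on UNIV (qK K m :: real^'d \<Rightarrow> real^'d)"
proof -
  have "continuous_on UNIV (\<lambda>x::real^'d. rK K x powr (m-1))"
    using assms by (intro continuous_on_powr' cont_rK continuous_on_const) (auto simp: rK_def)
  then show ?thesis unfolding qK_def using assms
    by (intro continuous_on_scaleR continuous_on_divide continuous_on_mult continuous_on_const
        continuous_on_id continuous_on_max continuous_on_norm) auto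
qed

lemma cont_LK: assumes "m > 2" shows "continuous_on UNIV (LK K m :: real^'d \<Rightarrow> real)"
proof -
  have c1: "continuous_on UNIV (\<lambda>x::real^'d. rK K x + 1)" by (intro continuous_intros cont_rK)
  have "continuous_on UNIV (\<lambda>x::real^'d. (rK K x + 1) powr (m-2))"
    using assms by (intro continuous_on_powr' c1 continuous_on_const) (auto simp: rK_def)
  then show ?thesis unfolding LK_def by (intro continuous_on_mult continuous_on_const)
qed

lemma norm_qK: assumes "m > 1" "K > 0" shows "norm (qK K m x) \<le> m * rK K x powr (m-1)"
proof -
  have mx: "norm x / max (norm x) (K/2) \<le> 1" using assms by (auto simp: divide_le_eq)
  have "norm (qK K m x) = m * rK K x powr (m-1) * (norm x / max (norm x) (K/2))"
    unfolding qK_def using assms by simp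
  also have "\<dots> \<le> m * rK K x powr (m-1) * 1"
    using mx assms by (intro mult_left_mono) auto
  finally show ?thesis by simp
qed

lemma powr_split: fixes r m :: real assumes "r \<ge> 0" "m > 0" shows "(1 + r) powr m \<le> 2 powr m * (1 + r powr m)"
proof (cases "r \<le> 1")
  case True
  have "(1 + r) powr m \<le> 2 powr m" using True assms by (intro powr_mono2) auto
  also have "\<dots> \<le> 2 powr m * (1 + r powr m)" by (simp add: mult_le_cancel_left1)
  finally show ?thesis .
next
  case False
  have "(1 + r) powr m \<le> (2 * r) powr m" using False assms by (intro powr_mono2) auto
  also have "\<dots> = 2 powr m * r powr m" using False by (simp add: powr_mult)
  also have "\<dots> \<le> 2 powr m * (1 + r powr m)" by (intro mult_left_mono) auto
  finally show ?thesis .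
qed

lemma growth_bound:
  assumes K: "K > 0" and m: "m > 2" and Ca: "Ca \<ge> 0"
  shows "\<exists>B\<ge>0. \<forall>x::real^'d.
     norm (qK K m x) * (Ca*(1+norm x)) + LK K m x * (Ca*(1+norm x))^2
       + \<bar>kf\<bar> * ((Ca*(1+norm x)) * norm (qK K m x)) \<le> B * (1 + hK K m x)"
proof -
  define c where "c = Ca * (1 + K)"
  define B0 where "B0 = m * c * (1 + \<bar>kf\<bar>) + 2*m^2 * c^2"
  have c0: "c \<ge> 0" using Ca K by (simp add: c_def)
  have B00: "B0 \<ge> 0" using c0 m unfolding B0_def by simp
  show ?thesis
  proof (intro exI[of _ "B0 * 2 powr m"] conjI allI)
    show "B0 * 2 powr m \<ge> 0" using B00 by simp
    fix x :: "real^'d"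
    define r where "r = rK K x"
    define u where "u = 1 + r"
    have r0: "r \<ge> 0" by (simp add: r_def rK_def)
    have u1: "u \<ge> 1" using r0 by (simp add: u_def)
    define P where "P = u powr m"
    have P0: "P \<ge> 0" by (simp add: P_def)
    define g where "g = Ca*(1+norm x)"
    have g0: "g \<ge> 0" using Ca by (simp add: g_def)
    have gb: "g \<le> c * u"
    proof -
      have "norm x \<le> K + r" by (simp add: r_def rK_def)
      moreover have "K*r \<ge> 0" using K r0 by simp
      moreover have "(1+K)*(1+r) = 1 + K + r + K*r" by (simp add: algebra_simps)
      ultimately have "1 + norm x \<le> (1+K)*(1+r)" by linarith
      then show ?thesis unfolding g_def c_def u_def using Ca by (simp add: mult.assoc mult_left_mono)
    qed
    have nq: "norm (qK K m x) \<le> m * u powr (m-1)"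
    proof -
      have "r powr (m-1) \<le> u powr (m-1)" using r0 m by (intro powr_mono2) (auto simp: u_def)
      then show ?thesis using norm_qK[of m K x] m K r_def by (smt (verit) mult_left_mono)
    qed
    have pu1: "u powr (m-1) * u = P"
    proof -
      have "u powr (m-1) * u = u powr (m-1) * u powr 1" using u1 by simp
      also have "\<dots> = u powr ((m-1)+1)" by (rule powr_add[symmetric])
      finally show ?thesis by (simp add: P_def)
    qed
    have pu2: "u powr (m-2) * u^2 = P"
    proof -
      have "u powr (m-2) * u^2 = u powr (m-2) * u powr 2" using u1 by (simp add: powr_numeral)
      also have "\<dots> = u powr ((m-2)+2)" by (rule powr_add[symmetric])
      finally show ?thesis by (simp add: P_def)
    qed
    have t1: "norm (qK K m x) * g \<le> m * c * P"
    proof -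
      have "norm (qK K m x) * g \<le> (m * u powr (m-1)) * (c * u)"
        using nq gb g0 m by (intro mult_mono) auto
      also have "\<dots> = m * c * P" using pu1 by (simp add: algebra_simps)
      finally show ?thesis .
    qed
    have t2: "LK K m x * g^2 \<le> 2*m^2*c^2 * P"
    proof -
      have L: "LK K m x = 2*m^2 * u powr (m-2)" by (simp add: LK_def u_def r_def add.commute)
      have "g^2 \<le> (c*u)^2" using gb g0 by (intro power_mono) auto
      then have "LK K m x * g^2 \<le> 2*m^2 * u powr (m-2) * (c*u)^2" unfolding L
        by (intro mult_left_mono) auto
      also have "\<dots> = 2*m^2*c^2 * (u powr (m-2) * u^2)" by (simp add: power_mult_distrib algebra_simps)
      finally show ?thesis using pu2 by simp
    qed
    have t3: "\<bar>kf\<bar> * (g * norm (qK K m x)) \<le> \<bar>kf\<bar> * (m * c * P)"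
      using t1 by (intro mult_left_mono) (auto simp: mult.commute)
    have sum: "norm (qK K m x) * g + LK K m x * g^2 + \<bar>kf\<bar> * (g * norm (qK K m x)) \<le> B0 * P"
      using t1 t2 t3 unfolding B0_def by (simp add: algebra_simps)
    have "P \<le> 2 powr m * (1 + hK K m x)"
      using powr_split[OF r0, of m] m unfolding P_def u_def hK_def r_def by simp
    then have "B0 * P \<le> B0 * (2 powr m * (1 + hK K m x))" using B00 by (intro mult_left_mono)
    then show "norm (qK K m x) * (Ca*(1+norm x)) + LK K m x * (Ca*(1+norm x))^2
       + \<bar>kf\<bar> * ((Ca*(1+norm x)) * norm (qK K m x)) \<le> B0 * 2 powr m * (1 + hK K m x)"
      using sum unfolding g_def by (simp add: mult.assoc)
  qed
qed

lemma exp_deriv_est: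
  fixes vp t :: real
  assumes "\<eta> > 0"
  shows "\<exists>\<delta>>0. \<forall>s. \<bar>s - t\<bar> < \<delta> \<longrightarrow>
     abs (exp (-vp * s) - exp (-vp*t) + vp * exp (-vp*t) * (s - t)) \<le> \<eta> * \<bar>s - t\<bar>"
proof -
  have "((\<lambda>s. exp (-vp * s)) has_field_derivative (-vp * exp (-vp*t))) (at t)"
    by (auto intro!: derivative_eq_intros)
  then have "((\<lambda>s. (exp (-vp * s) - exp (-vp*t)) / (s - t)) \<longlongrightarrow> (-vp * exp (-vp*t))) (at t)"
    by (simp add: has_field_derivative_iff)
  then have "eventually (\<lambda>s. dist ((exp (-vp * s) - exp (-vp*t)) / (s - t)) (-vp * exp (-vp*t)) < \<eta>) (at t)"
    using assms by (rule tendstoD)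
  then obtain d where d: "d > 0" and
     hd: "\<forall>s. s \<noteq> t \<and> dist s t < d \<longrightarrow> dist ((exp (-vp * s) - exp (-vp*t)) / (s - t)) (-vp * exp (-vp*t)) < \<eta>"
    unfolding eventually_at by auto
  show ?thesis
  proof (intro exI[of _ d] conjI allI impI)
    show "d > 0" by fact
    fix s assume s: "\<bar>s - t\<bar> < d"
    show "abs (exp (-vp * s) - exp (-vp*t) + vp * exp (-vp*t) * (s - t)) \<le> \<eta> * \<bar>s - t\<bar>"
    proof (cases "s = t")
      case True then show ?thesis by simp
    next
      case False
      have st: "s - t \<noteq> 0" using False by simp
      from hd[rule_format, of s] s False have
        "abs ((exp (-vp * s) - exp (-vp*t)) / (s - t) + vp * exp (-vp*t)) < \<eta>"
        by (simp add: dist_real_def)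
      moreover have "exp (-vp * s) - exp (-vp*t) + vp * exp (-vp*t) * (s - t)
          = ((exp (-vp * s) - exp (-vp*t)) / (s - t) + vp * exp (-vp*t)) * (s - t)"
        using st by (simp add: field_simps)
      ultimately show ?thesis by (simp add: abs_mult mult_right_mono)
    qed
  qed
qed

lemma phi_est:
  fixes x :: "real^'d"
  assumes K: "K > 0" and m: "m > 2" and th: "\<theta> \<ge> 0" and \<epsilon>: "\<epsilon> > 0"
  shows "\<exists>r>0. \<forall>s y. \<bar>s - t\<bar> + norm (y - x) < r \<longrightarrow>
     \<theta> * exp (-vp * s) * (1 + hK K m y) - \<theta> * exp (-vp*t) * (1 + hK K m x)
       \<le> -vp * \<theta> * exp (-vp*t) * (1 + hK K m x) * (s - t)
          + \<theta> * exp (-vp*t) * (qK K m x \<bullet> (y - x) + LK K m x * (norm (y - x))^2) + \<epsilon> * \<bar>s - t\<bar>"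
proof -
  define Et where "Et = exp (-vp*t)"
  define Ax where "Ax = 1 + hK K m x"
  have Ax1: "Ax \<ge> 1" by (simp add: Ax_def hK_def)
  have Et0: "Et > 0" by (simp add: Et_def)
  define L where "L = \<bar>vp\<bar> * Et + 1"
  have L1: "L \<ge> 1" by (simp add: L_def Et0 less_imp_le)
  define \<eta>1 where "\<eta>1 = min 1 (\<epsilon> / (2*(\<theta>+1)*Ax))"
  define \<eta>2 where "\<eta>2 = \<epsilon> / (2*(\<theta>+1)*L)"
  have e1: "\<eta>1 > 0" using \<epsilon> th Ax1 by (simp add: \<eta>1_def)
  have e2: "\<eta>2 > 0" using \<epsilon> th L1 by (simp add: \<eta>2_def)
  obtain d1 where d1: "d1 > 0" and hd1: "\<forall>s. \<bar>s - t\<bar> < d1 \<longrightarrow>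
     abs (exp (-vp * s) - Et + vp * Et * (s - t)) \<le> \<eta>1 * \<bar>s - t\<bar>"
    using exp_deriv_est[OF e1, of t vp] unfolding Et_def by blast
  have "continuous_on UNIV (hK K m :: real^'d \<Rightarrow> real)" using m by (intro cont_hK) auto
  then obtain d2 where d2: "d2 > 0" and hd2: "\<forall>y. dist y x < d2 \<longrightarrow> dist (hK K m y) (hK K m x) < \<eta>2"
    unfolding continuous_on_iff using e2 by blast
  obtain d3 where d3: "d3 > 0" and hd3: "\<forall>y. norm (y - x) < d3 \<longrightarrow>
           hK K m y \<le> hK K m x + qK K m x \<bullet> (y - x) + LK K m x * (norm (y - x))^2"
    using hK_taylor[OF K m, of x] by blast
  show ?thesis
  proof (intro exI[of _ "min d1 (min d2 d3)"] conjI allI impI)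
    show "min d1 (min d2 d3) > 0" using d1 d2 d3 by simp
    fix s and y :: "real^'d"
    assume h: "\<bar>s - t\<bar> + norm (y - x) < min d1 (min d2 d3)"
    have n0: "norm (y - x) \<ge> 0" "\<bar>s - t\<bar> \<ge> 0" by simp_all
    have st: "\<bar>s - t\<bar> < d1" using h n0 by linarith
    have yx3: "norm (y - x) < d3" using h n0 by linarith
    have "norm (y - x) < d2" using h n0 by linarith
    then have yx2: "dist y x < d2" by (simp add: dist_norm)
    define Es where "Es = exp (-vp * s)"
    define Ay where "Ay = 1 + hK K m y"
    have D: "\<bar>Es - Et + vp * Et * (s - t)\<bar> \<le> \<eta>1 * \<bar>s - t\<bar>" using hd1 st unfolding Es_def by blast
    have C: "\<bar>Ay - Ax\<bar> \<le> \<eta>2" using hd2 yx2 unfolding Ay_def Ax_def dist_real_def by force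
    have Tay: "Ay - Ax \<le> qK K m x \<bullet> (y - x) + LK K m x * (norm (y - x))^2"
      using hd3 yx3 unfolding Ay_def Ax_def by force
    have p1: "(Es - Et) * Ax \<le> -vp * Et * (s - t) * Ax + \<eta>1 * \<bar>s - t\<bar> * Ax"
    proof -
      have "Es - Et \<le> -vp * Et * (s - t) + \<eta>1 * \<bar>s - t\<bar>" using D by linarith
      then have "(Es - Et) * Ax \<le> (-vp * Et * (s - t) + \<eta>1 * \<bar>s - t\<bar>) * Ax"
        using Ax1 by (intro mult_right_mono) auto
      then show ?thesis by (simp add: algebra_simps)
    qed
    have ESE: "\<bar>Es - Et\<bar> \<le> L * \<bar>s - t\<bar>"
    proof -
      have "\<bar>Es - Et\<bar> \<le> \<bar>vp * Et * (s - t)\<bar> + \<eta>1 * \<bar>s - t\<bar>" using D by linarith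
      also have "\<dots> = (\<bar>vp\<bar> * Et + \<eta>1) * \<bar>s - t\<bar>" using Et0 by (simp add: abs_mult distrib_right)
      also have "\<dots> \<le> L * \<bar>s - t\<bar>" unfolding L_def using e1 \<eta>1_def
        by (intro mult_right_mono) auto
      finally show ?thesis .
    qed
    have p2: "(Es - Et) * (Ay - Ax) \<le> L * \<bar>s - t\<bar> * \<eta>2"
    proof -
      have "(Es - Et) * (Ay - Ax) \<le> \<bar>Es - Et\<bar> * \<bar>Ay - Ax\<bar>" by (simp add: abs_mult[symmetric])
      also have "\<dots> \<le> (L * \<bar>s - t\<bar>) * \<eta>2" using ESE C by (intro mult_mono) auto
      finally show ?thesis .
    qed
    have p3: "Et * (Ay - Ax) \<le> Et * (qK K m x \<bullet> (y - x) + LK K m x * (norm (y - x))^2)"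
      using Tay Et0 by (intro mult_left_mono) auto
    have decomp: "Es * Ay - Et * Ax = (Es - Et) * Ax + (Es - Et) * (Ay - Ax) + Et * (Ay - Ax)"
      by (simp add: algebra_simps)
    have small: "\<theta> * (\<eta>1 * \<bar>s - t\<bar> * Ax + L * \<bar>s - t\<bar> * \<eta>2) \<le> \<epsilon> * \<bar>s - t\<bar>"
    proof -
      have a: "\<theta> * \<eta>1 * Ax \<le> \<epsilon>/2"
      proof -
        have "\<eta>1 \<le> \<epsilon> / (2*(\<theta>+1)*Ax)" by (simp add: \<eta>1_def)
        then have "\<theta> * \<eta>1 * Ax \<le> \<theta> * (\<epsilon> / (2*(\<theta>+1)*Ax)) * Ax"
          using th Ax1 by (intro mult_right_mono mult_left_mono) auto
        also have "\<dots> = \<epsilon>/2 * (\<theta> / (\<theta>+1))"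
        proof -
          have "Ax \<noteq> 0" "\<theta> + 1 \<noteq> 0" using Ax1 th by auto
          then show ?thesis by (simp add: divide_simps)
        qed
        also have "\<dots> \<le> \<epsilon>/2 * 1" using \<epsilon> th by (intro mult_left_mono) auto
        finally show ?thesis by simp
      qed
      have b: "\<theta> * L * \<eta>2 \<le> \<epsilon>/2"
      proof -
        have "L \<noteq> 0" "\<theta> + 1 \<noteq> 0" using L1 th by auto
        then have "\<theta> * L * \<eta>2 = \<epsilon>/2 * (\<theta> / (\<theta>+1))" by (simp add: \<eta>2_def divide_simps)
        also have "\<dots> \<le> \<epsilon>/2 * 1" using \<epsilon> th by (intro mult_left_mono) auto
        finally show ?thesis by simp
      qed
      have "\<theta> * (\<eta>1 * \<bar>s - t\<bar> * Ax + L * \<bar>s - t\<bar> * \<eta>2) = (\<theta> * \<eta>1 * Ax + \<theta> * L * \<eta>2) * \<bar>s - t\<bar>"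
        by (simp add: algebra_simps)
      also have "\<dots> \<le> \<epsilon> * \<bar>s - t\<bar>" using a b by (intro mult_right_mono) auto
      finally show ?thesis .
    qed
    have "Es * Ay - Et * Ax \<le> -vp * Et * (s - t) * Ax + Et * (qK K m x \<bullet> (y - x) + LK K m x * (norm (y - x))^2)
         + (\<eta>1 * \<bar>s - t\<bar> * Ax + L * \<bar>s - t\<bar> * \<eta>2)"
      using decomp p1 p2 p3 by linarith
    then have "\<theta> * (Es * Ay - Et * Ax) \<le> \<theta> * (-vp * Et * (s - t) * Ax + Et * (qK K m x \<bullet> (y - x) + LK K m x * (norm (y - x))^2))
         + \<theta> * (\<eta>1 * \<bar>s - t\<bar> * Ax + L * \<bar>s - t\<bar> * \<eta>2)"
      using th by (simp add: distrib_left[symmetric] mult_left_mono)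
    then show "\<theta> * exp (-vp * s) * (1 + hK K m y) - \<theta> * exp (-vp*t) * (1 + hK K m x)
       \<le> -vp * \<theta> * exp (-vp*t) * (1 + hK K m x) * (s - t)
          + \<theta> * exp (-vp*t) * (qK K m x \<bullet> (y - x) + LK K m x * (norm (y - x))^2) + \<epsilon> * \<bar>s - t\<bar>"
      using small unfolding Es_def Et_def Ay_def Ax_def by (simp add: algebra_simps)
  qed
qed

lemma subjet_transfer:
  fixes x :: "real^'d"
  assumes K: "K > 0" and m: "m > 2" and th: "\<theta> \<ge> 0"
    and w: "\<And>s y. w s y = v s y + \<theta> * exp (-vp * s) * (1 + hK K m y)"
    and J: "(p,q,M) \<in> subjet T w t x"
  shows "(p + vp * \<theta> * exp (-vp * t) * (1 + hK K m x),
          q - (\<theta> * exp (-vp * t)) *\<^sub>R qK K m x,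
          M - (2 * \<theta> * exp (-vp * t) * LK K m x) *\<^sub>R mat 1) \<in> subjet T v t x"
proof -
  define c where "c = \<theta> * exp (-vp * t)"
  define A where "A = 1 + hK K m x"
  define Q where "Q = qK K m x"
  define \<Lambda> where "\<Lambda> = LK K m x"
  have Jw: "\<forall>\<epsilon>>0. \<exists>r>0. \<forall>(s,y)\<in>pdom T.
      \<bar>s - t\<bar> + norm (y - x) < r \<longrightarrow>
        w s y \<ge> w t x + p * (s - t) + q \<bullet> (y - x) + (1/2) * ((y - x) \<bullet> (M *v (y - x)))
                 - \<epsilon> * (\<bar>s - t\<bar> + (norm (y - x))\<^sup>2)"
    using J unfolding subjet_def by simp
  have "\<forall>\<epsilon>>0. \<exists>r>0. \<forall>(s,y)\<in>pdom T.
      \<bar>s - t\<bar> + norm (y - x) < r \<longrightarrow>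
        v s y \<ge> v t x + (p + vp * c * A) * (s - t) + (q - c *\<^sub>R Q) \<bullet> (y - x)
             + (1/2) * ((y - x) \<bullet> ((M - (2 * c * \<Lambda>) *\<^sub>R mat 1) *v (y - x)))
                 - \<epsilon> * (\<bar>s - t\<bar> + (norm (y - x))\<^sup>2)"
  proof (intro allI impI)
    fix \<epsilon> :: real assume e: "\<epsilon> > 0"
    then have e2: "\<epsilon>/2 > 0" by simp
    obtain r1 where r1: "r1 > 0" and h1: "\<forall>(s,y)\<in>pdom T.
      \<bar>s - t\<bar> + norm (y - x) < r1 \<longrightarrow>
        w s y \<ge> w t x + p * (s - t) + q \<bullet> (y - x) + (1/2) * ((y - x) \<bullet> (M *v (y - x)))
                 - \<epsilon>/2 * (\<bar>s - t\<bar> + (norm (y - x))\<^sup>2)"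
      using Jw e2 by blast
    obtain r2 where r2: "r2 > 0" and h2: "\<forall>s y. \<bar>s - t\<bar> + norm (y - x) < r2 \<longrightarrow>
     \<theta> * exp (-vp * s) * (1 + hK K m y) - \<theta> * exp (-vp * t) * (1 + hK K m x)
       \<le> -vp * \<theta> * exp (-vp * t) * (1 + hK K m x) * (s - t)
          + \<theta> * exp (-vp * t) * (qK K m x \<bullet> (y - x) + LK K m x * (norm (y - x))^2) + \<epsilon>/2 * \<bar>s - t\<bar>"
      using phi_est[OF K m th e2, of t x vp] by blast
    show "\<exists>r>0. \<forall>(s,y)\<in>pdom T.
      \<bar>s - t\<bar> + norm (y - x) < r \<longrightarrow>
        v s y \<ge> v t x + (p + vp * c * A) * (s - t) + (q - c *\<^sub>R Q) \<bullet> (y - x)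
             + (1/2) * ((y - x) \<bullet> ((M - (2 * c * \<Lambda>) *\<^sub>R mat 1) *v (y - x)))
                 - \<epsilon> * (\<bar>s - t\<bar> + (norm (y - x))\<^sup>2)"
    proof (intro exI[of _ "min r1 r2"] conjI)
      show "min r1 r2 > 0" using r1 r2 by simp
      have "v s y \<ge> v t x + (p + vp * c * A) * (s - t) + (q - c *\<^sub>R Q) \<bullet> (y - x)
             + (1/2) * ((y - x) \<bullet> ((M - (2 * c * \<Lambda>) *\<^sub>R mat 1) *v (y - x)))
                 - \<epsilon> * (\<bar>s - t\<bar> + (norm (y - x))\<^sup>2)"
        if z: "(s,y) \<in> pdom T" and d: "\<bar>s - t\<bar> + norm (y - x) < min r1 r2" for s y
      proof -
      define e where "e = y - x"
      have a1: "w s y \<ge> w t x + p * (s - t) + q \<bullet> e + (1/2) * (e \<bullet> (M *v e))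
                 - \<epsilon>/2 * (\<bar>s - t\<bar> + (norm e)\<^sup>2)"
        using h1 z d unfolding e_def by auto
      have a2: "\<theta> * exp (-vp * s) * (1 + hK K m y) - c * A
          \<le> -vp * c * A * (s - t) + c * (Q \<bullet> e + \<Lambda> * (norm e)^2) + \<epsilon>/2 * \<bar>s - t\<bar>"
        using h2 d unfolding c_def A_def Q_def \<Lambda>_def e_def by (simp add: mult.assoc)
      have q1: "e \<bullet> ((M - (2 * c * \<Lambda>) *\<^sub>R mat 1) *v e) = e \<bullet> (M *v e) - (2 * c * \<Lambda>) * (norm e)^2"
        using quad_shift[of e M "-(2 * c * \<Lambda>)"] by simp
      have q2: "(q - c *\<^sub>R Q) \<bullet> e = q \<bullet> e - c * (Q \<bullet> e)" by (simp add: inner_diff_left)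
      have wv: "w s y = v s y + \<theta> * exp (-vp * s) * (1 + hK K m y)" "w t x = v t x + c * A"
        using w unfolding c_def A_def by auto
      have ne: "(norm e)^2 \<ge> 0" by simp
      have "v s y \<ge> v t x + (p + vp * c * A) * (s - t) + (q - c *\<^sub>R Q) \<bullet> e
             + (1/2) * (e \<bullet> ((M - (2 * c * \<Lambda>) *\<^sub>R mat 1) *v e))
                 - \<epsilon> * (\<bar>s - t\<bar> + (norm e)\<^sup>2)"
      proof -
        define P where "P = \<theta> * exp (-vp * s) * (1 + hK K m y)"
        have E1: "(p + vp * c * A) * (s - t) = p * (s - t) + vp * c * A * (s - t)" by (simp add: algebra_simps)
        have E2: "(1/2) * (e \<bullet> (M *v e) - (2 * c * \<Lambda>) * (norm e)^2) = (1/2) * (e \<bullet> (M *v e)) - c * \<Lambda> * (norm e)^2"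
          by (simp add: algebra_simps)
        have E3: "c * (Q \<bullet> e + \<Lambda> * (norm e)^2) = c * (Q \<bullet> e) + c * \<Lambda> * (norm e)^2" by (simp add: algebra_simps)
        have E4: "\<epsilon> * (\<bar>s - t\<bar> + (norm e)\<^sup>2) = \<epsilon> * \<bar>s - t\<bar> + \<epsilon> * (norm e)\<^sup>2"
          "\<epsilon>/2 * (\<bar>s - t\<bar> + (norm e)\<^sup>2) = \<epsilon>/2 * \<bar>s - t\<bar> + \<epsilon>/2 * (norm e)\<^sup>2"
          by (simp_all add: algebra_simps)
        have E5: "-vp * c * A * (s - t) = - (vp * c * A * (s - t))" by simp
        have E6: "c * (Q \<bullet> e) = c * (Q \<bullet> e)" ..
        have a1': "v s y + P \<ge> v t x + c * A + p * (s - t) + q \<bullet> e + (1/2) * (e \<bullet> (M *v e))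
                 - \<epsilon>/2 * (\<bar>s - t\<bar> + (norm e)\<^sup>2)" using a1 wv unfolding P_def by simp
        have a2': "P - c * A \<le> -vp * c * A * (s - t) + c * (Q \<bullet> e + \<Lambda> * (norm e)^2) + \<epsilon>/2 * \<bar>s - t\<bar>"
          using a2 unfolding P_def .
        have ea: "\<epsilon> * \<bar>s - t\<bar> \<ge> 0" "\<epsilon> * (norm e)\<^sup>2 \<ge> 0" using e by simp_all
        show ?thesis unfolding q1 q2 E1 E2 E4(1) using a1' a2' E3 E4(2) E5 ea by linarith
      qed
      then show ?thesis unfolding e_def .
      qed
      then show "\<forall>(s,y)\<in>pdom T. \<bar>s - t\<bar> + norm (y - x) < min r1 r2 \<longrightarrow>
        v s y \<ge> v t x + (p + vp * c * A) * (s - t) + (q - c *\<^sub>R Q) \<bullet> (y - x)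
             + (1/2) * ((y - x) \<bullet> ((M - (2 * c * \<Lambda>) *\<^sub>R mat 1) *v (y - x)))
                 - \<epsilon> * (\<bar>s - t\<bar> + (norm (y - x))\<^sup>2)" by blast
    qed
  qed
  then show ?thesis unfolding subjet_def c_def A_def Q_def \<Lambda>_def by (simp add: mult.assoc)
qed

lemma ereal_diff_nonneg_iff: "0 \<le> ereal a - b \<longleftrightarrow> b \<le> ereal a"
  by (cases b) auto

lemma H_lemma:
  assumes "(INF e\<in>E. ereal (gv e)) \<le> ereal a" and "\<forall>e\<in>E. gw e \<le> gv e + c"
  shows "(INF e\<in>E. ereal (gw e)) \<le> ereal (a + c)"
proof (rule ereal_le_epsilon2)
  fix \<delta> :: real assume d: "\<delta> > 0"
  have "ereal a < ereal (a + \<delta>)" using d by simp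
  then have "(INF e\<in>E. ereal (gv e)) < ereal (a + \<delta>)" using assms(1) by (rule le_less_trans[rotated])
  then obtain e where e: "e \<in> E" "ereal (gv e) < ereal (a + \<delta>)" unfolding INF_less_iff by blast
  have "(INF e\<in>E. ereal (gw e)) \<le> ereal (gw e)" using e(1) by (rule INF_lower)
  also have "\<dots> \<le> ereal (a + c) + ereal \<delta>" using e assms(2) by auto
  finally show "(INF e\<in>E. ereal (gw e)) \<le> ereal (a + c) + ereal \<delta>" .
qed

lemma M_lemma:
  assumes "(SUP b\<in>U. ereal (gv b)) \<le> ereal a" and "\<forall>b\<in>U. gw b \<le> gv b + c"
  shows "(SUP b\<in>U. ereal (gw b)) \<le> ereal (a + c)"
  using assms unfolding SUP_le_iff by force

lemma hK_mono:
  assumes "m > 0" "norm y \<le> max K (norm x)"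
  shows "hK K m y \<le> hK K m x"
proof -
  have "rK K y \<le> rK K x" using assms(2) unfolding rK_def by (auto simp: max_def)
  then show ?thesis unfolding hK_def using assms(1) by (intro powr_mono2) (auto simp: rK_def)
qed

lemma limsubjet_transfer:
  fixes x :: "real^'d"
  assumes K: "K > 0" and m: "m > 2" and th: "\<theta> \<ge> 0"
    and w: "\<And>s y. w s y = v s y + \<theta> * exp (-vp * s) * (1 + hK K m y)"
    and J: "(p,q,M) \<in> limsubjet T w t x"
  shows "(p + vp * \<theta> * exp (-vp * t) * (1 + hK K m x),
          q - (\<theta> * exp (-vp * t)) *\<^sub>R qK K m x,
          M - (2 * \<theta> * exp (-vp * t) * LK K m x) *\<^sub>R mat 1) \<in> limsubjet T v t x"
proof -
  obtain tn xn pn qn Mn where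
    H: "\<forall>n. (tn n, xn n) \<in> pdom T \<and> (pn n, qn n, Mn n) \<in> subjet T w (tn n) (xn n)"
    and lt: "tn \<longlonglongrightarrow> t" and lx: "xn \<longlonglongrightarrow> x" and lw: "(\<lambda>n. w (tn n) (xn n)) \<longlonglongrightarrow> w t x"
    and lp: "pn \<longlonglongrightarrow> p" and lq: "qn \<longlonglongrightarrow> q" and lM: "Mn \<longlonglongrightarrow> M"
    using J unfolding limsubjet_def by blast
  have "continuous_on UNIV (hK K m :: real^'d \<Rightarrow> real)" using m by (intro cont_hK) simp
  then have ch: "isCont (hK K m) x" by (simp add: continuous_on_eq_continuous_at)
  have "continuous_on UNIV (qK K m :: real^'d \<Rightarrow> real^'d)" using m K by (intro cont_qK) simp_all
  then have cq: "isCont (qK K m) x" by (simp add: continuous_on_eq_continuous_at)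
  have "continuous_on UNIV (LK K m :: real^'d \<Rightarrow> real)" using m by (intro cont_LK) simp
  then have cL: "isCont (LK K m) x" by (simp add: continuous_on_eq_continuous_at)
  have lh: "(\<lambda>n. hK K m (xn n)) \<longlonglongrightarrow> hK K m x" by (rule isCont_tendsto_compose[OF ch lx])
  have lqK: "(\<lambda>n. qK K m (xn n)) \<longlonglongrightarrow> qK K m x" by (rule isCont_tendsto_compose[OF cq lx])
  have lL: "(\<lambda>n. LK K m (xn n)) \<longlonglongrightarrow> LK K m x" by (rule isCont_tendsto_compose[OF cL lx])
  have le: "(\<lambda>n. exp (-vp * tn n)) \<longlonglongrightarrow> exp (-vp * t)" by (intro tendsto_intros lt)
  have lphi: "(\<lambda>n. \<theta> * exp (-vp * tn n) * (1 + hK K m (xn n))) \<longlonglongrightarrow> \<theta> * exp (-vp * t) * (1 + hK K m x)"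
    by (intro tendsto_intros le lh)
  have lv: "(\<lambda>n. v (tn n) (xn n)) \<longlonglongrightarrow> v t x"
  proof -
    have "(\<lambda>n. w (tn n) (xn n) - \<theta> * exp (-vp * tn n) * (1 + hK K m (xn n)))
          \<longlonglongrightarrow> w t x - \<theta> * exp (-vp * t) * (1 + hK K m x)"
      by (intro tendsto_diff lw lphi)
    then show ?thesis using w by simp
  qed
  define P' where "P' = (\<lambda>n. pn n + vp * \<theta> * exp (-vp * tn n) * (1 + hK K m (xn n)))"
  define Q' where "Q' = (\<lambda>n. qn n - (\<theta> * exp (-vp * tn n)) *\<^sub>R qK K m (xn n))"
  define M' where "M' = (\<lambda>n. Mn n - (2 * \<theta> * exp (-vp * tn n) * LK K m (xn n)) *\<^sub>R mat 1)"
  have A: "\<forall>n. (tn n, xn n) \<in> pdom T \<and> (P' n, Q' n, M' n) \<in> subjet T v (tn n) (xn n)"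
    using H subjet_transfer[OF K m th w] unfolding P'_def Q'_def M'_def by blast
  have B1: "P' \<longlonglongrightarrow> p + vp * \<theta> * exp (-vp * t) * (1 + hK K m x)"
    unfolding P'_def by (intro tendsto_intros lp le lh)
  have B2: "Q' \<longlonglongrightarrow> q - (\<theta> * exp (-vp * t)) *\<^sub>R qK K m x"
    unfolding Q'_def by (intro tendsto_intros lq le lqK)
  have B3: "M' \<longlonglongrightarrow> M - (2 * \<theta> * exp (-vp * t) * LK K m x) *\<^sub>R mat 1"
    unfolding M'_def by (intro tendsto_intros lM le lL)
  show ?thesis unfolding limsubjet_def using A lt lx lv B1 B2 B3 by blast
qed

lemma F_step:
  fixes S M :: "real^'d^'d" and av Q q :: "real^'d"
  assumes c: "c > 0" and A: "A \<ge> 1" and L: "\<Lambda> \<ge> 0"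
    and na: "norm av \<le> g" and ns: "norm S \<le> g"
    and HB: "norm Q * g + \<Lambda> * g^2 + \<bar>kf\<bar> * (g * norm Q) \<le> B * A"
    and vp: "vp \<ge> B + \<bar>kf\<bar>"
    and flip: "\<bar>fw - fv\<bar> \<le> kf * (\<bar>c*A\<bar> + norm (transpose S *v q - transpose S *v (q - c *\<^sub>R Q)))"
    and Fv: "0 \<le> -(p + vp*c*A) - (q - c *\<^sub>R Q) \<bullet> av
               - (1/2) * trace (S ** transpose S ** (M - (2*c*\<Lambda>) *\<^sub>R mat 1)) - fv"
  shows "0 \<le> -p - q \<bullet> av - (1/2) * trace (S ** transpose S ** M) - fw"
proof -
  define X where "X = S ** transpose S"
  have trX: "trace X = (norm S)^2" unfolding X_def by (rule trace_AAt)
  have tr: "trace (X ** M) = trace (X ** (M - (2*c*\<Lambda>) *\<^sub>R mat 1)) + (2*c*\<Lambda>) * trace X"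
    using trace_shift[of X "M - (2*c*\<Lambda>) *\<^sub>R mat 1" "2*c*\<Lambda>"] by simp
  have qa: "(q - c *\<^sub>R Q) \<bullet> av = q \<bullet> av - c * (Q \<bullet> av)" by (simp add: inner_diff_left)
  have nSQ: "norm (transpose S *v q - transpose S *v (q - c *\<^sub>R Q)) = c * norm (transpose S *v Q)"
    using c by (simp add: matrix_vector_mult_diff_distrib matrix_vector_mult_scaleR)
  have g0: "g \<ge> 0" using na norm_ge_zero order_trans by blast
  have kf0: "kf \<ge> 0"
  proof -
    have "0 \<le> \<bar>fw - fv\<bar>" by simp
    have "kf * (\<bar>c*A\<bar> + c * norm (transpose S *v Q)) \<ge> 0" using flip nSQ by (metis abs_ge_zero order_trans)
    moreover have "\<bar>c*A\<bar> + c * norm (transpose S *v Q) > 0" using c A by (simp add: add_pos_nonneg)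
    ultimately show ?thesis by (simp add: zero_le_mult_iff)
  qed
  have fwv: "fw \<le> fv + kf * (c*A) + kf * (c * norm (transpose S *v Q))"
    using flip nSQ c A by (simp add: abs_mult distrib_left)
  have b1: "Q \<bullet> av \<le> norm Q * g"
  proof -
    have "Q \<bullet> av \<le> norm Q * norm av" by (rule norm_cauchy_schwarz)
    also have "\<dots> \<le> norm Q * g" using na by (intro mult_left_mono) auto
    finally show ?thesis .
  qed
  have b2: "\<Lambda> * trace X \<le> \<Lambda> * g^2"
    unfolding trX using ns L by (intro mult_left_mono power_mono) auto
  have b3: "kf * norm (transpose S *v Q) \<le> \<bar>kf\<bar> * (g * norm Q)"
  proof -
    have "norm (transpose S *v Q) \<le> norm (transpose S) * norm Q" by (rule norm_mat_vec)
    also have "\<dots> \<le> g * norm Q" using ns by (simp add: norm_transpose_mat mult_right_mono)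
    finally show ?thesis using kf0 by (simp add: mult_left_mono)
  qed
  have key: "Q \<bullet> av + \<Lambda> * trace X + kf * norm (transpose S *v Q) + kf * A \<le> vp * A"
  proof -
    have "(B + \<bar>kf\<bar>) * A \<le> vp * A" using vp A by (intro mult_right_mono) auto
    then show ?thesis using b1 b2 b3 HB kf0 by (simp add: algebra_simps)
  qed
  then have key2: "c * (Q \<bullet> av) + c * (\<Lambda> * trace X) + kf * (c * norm (transpose S *v Q)) + kf * (c*A) \<le> vp*c*A"
  proof -
    have "c * (Q \<bullet> av + \<Lambda> * trace X + kf * norm (transpose S *v Q) + kf * A) \<le> c * (vp * A)"
      using key c by (intro mult_left_mono) auto
    then show ?thesis by (simp add: algebra_simps)
  qed
  show ?thesis
    using Fv fwv key2 unfolding X_def[symmetric] qa tr by (simp add: algebra_simps)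
qed

theorem mainTheorem8:
  fixes T K kf :: real
    and U :: "'u::euclidean_space set" and E :: "(real^'d) set"
    and \<xi> :: "real \<Rightarrow> real^'d \<Rightarrow> 'u \<Rightarrow> real^'d"
    and \<gamma> :: "real \<Rightarrow> real^'d \<Rightarrow> real^'d \<Rightarrow> real^'d"
    and a :: "real \<Rightarrow> real^'d \<Rightarrow> real^'d"
    and \<sigma> :: "real \<Rightarrow> real^'d \<Rightarrow> real^'d^'d"
    and f :: "real \<Rightarrow> real^'d \<Rightarrow> real \<Rightarrow> real^'d \<Rightarrow> real"
    and \<psi> :: "real^'d \<Rightarrow> real"
    and ell :: "real \<Rightarrow> real^'d \<Rightarrow> 'u \<Rightarrow> real"
    and chi :: "real \<Rightarrow> real^'d \<Rightarrow> real^'d \<Rightarrow> real"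
    and v :: "real \<Rightarrow> real^'d \<Rightarrow> real"
    and C rr :: real
  assumes T: "T > 0"
    and E: "compact E" and U: "compact U"
    \<comment> \<open>(A1)\<close>
    and K: "K > 0"
    and xi_cont: "continuous_on ({0..T} \<times> UNIV \<times> U) (\<lambda>(t,x,b). \<xi> t x b)"
    and gamma_cont: "continuous_on ({0..T} \<times> UNIV \<times> E) (\<lambda>(t,x,e). \<gamma> t x e)"
    and xi_bd: "\<forall>t\<in>{0..T}. \<forall>x. \<forall>b\<in>U. norm (x + \<xi> t x b) \<le> max K (norm x)"
    and gamma_bd: "\<forall>t\<in>{0..T}. \<forall>x. \<forall>e\<in>E. norm (x + \<gamma> t x e) \<le> max K (norm x)"
    and gamma_lip: "\<exists>L. \<forall>t\<in>{0..T}. \<forall>e\<in>E. \<forall>x y.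
                       norm (\<gamma> t x e - \<gamma> t y e) \<le> L * norm (x - y)"
    \<comment> \<open>(A2)\<close>
    and a_sigma_growth: "\<exists>Ca. \<forall>t\<in>{0..T}. \<forall>x.
                       norm (a t x) + norm (\<sigma> t x) \<le> Ca * (1 + norm x)"
    and a_sigma_lip: "\<exists>L. \<forall>t\<in>{0..T}. \<forall>x y.
                       norm (a t x - a t y) + norm (\<sigma> t x - \<sigma> t y) \<le> L * norm (x - y)"
    \<comment> \<open>(A3)\<close>
    and f_cont: "\<forall>t\<in>{0..T}. \<forall>x. \<forall>\<epsilon>>0. \<exists>r>0. \<forall>s\<in>{0..T}. \<forall>y.
                   dist (s,y) (t,x) < r \<longrightarrow> (\<forall>yy z. \<bar>f s y yy z - f t x yy z\<bar> < \<epsilon>)"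
    and f_growth: "\<exists>Cf \<rho>. \<rho> > 0 \<and> (\<forall>t\<in>{0..T}. \<forall>x.
                      \<bar>f t x 0 0\<bar> \<le> Cf * (1 + norm x powr \<rho>))"
    and f_lip: "\<forall>t\<in>{0..T}. \<forall>x y y' z z'.
                  \<bar>f t x y z - f t x y' z'\<bar> \<le> kf * (\<bar>y - y'\<bar> + norm (z - z'))"
    \<comment> \<open>(A4)\<close>
    and psi_cont: "continuous_on UNIV \<psi>"
    and psi_growth: "\<exists>Cp p. \<forall>x. \<bar>\<psi> x\<bar> \<le> Cp * (1 + norm x powr p)"
    and psi_M: "\<forall>x. \<forall>b\<in>U. \<psi> (x + \<xi> T x b) - ell T x b \<le> \<psi> x"
    and psi_H: "\<forall>x. \<forall>e\<in>E. \<psi> x \<le> \<psi> (x + \<gamma> T x e) + chi T x e"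
    \<comment> \<open>(A5)\<close>
    and ell_pos: "\<exists>\<delta>>0. \<forall>t\<in>{0..T}. \<forall>x. \<forall>b\<in>U. ell t x b \<ge> \<delta>"
    and chi_nonneg: "\<forall>t\<in>{0..T}. \<forall>x. \<forall>e\<in>E. chi t x e \<ge> 0"
    and ell_cont: "continuous_on ({0..T} \<times> UNIV \<times> U) (\<lambda>(t,x,b). ell t x b)"
    and chi_cont: "continuous_on ({0..T} \<times> UNIV \<times> E) (\<lambda>(t,x,e). chi t x e)"
    and ell_growth: "\<exists>Cl p. \<forall>t\<in>{0..T}. \<forall>x. \<forall>b\<in>U. \<bar>ell t x b\<bar> \<le> Cl * (1 + norm x powr p)"
    and chi_growth: "\<exists>Cc p. \<forall>t\<in>{0..T}. \<forall>x. \<forall>e\<in>E. \<bar>chi t x e\<bar> \<le> Cc * (1 + norm x powr p)"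
    \<comment> \<open>the supersolution v and its growth\<close>
    and v_super: "visc_supersol T U E \<xi> \<gamma> a \<sigma> f \<psi> ell chi v"
    and C: "C > 0" and rho: "rr > 0"
    and v_growth: "\<forall>t\<in>{0..T}. \<forall>x. \<bar>v t x\<bar> \<le> C * (1 + norm x powr (2 * rr))"
  shows "\<exists>vp0>0. \<forall>vp>vp0. \<forall>\<theta>>0.
           visc_supersol T U E \<xi> \<gamma> a \<sigma> f \<psi> ell chi
             (\<lambda>t x. v t x + \<theta> * exp (- vp * t)
                        * (1 + (max (norm x - K) 0) powr (2 * rr + 2)))"
proof -
  define m where "m = 2*rr+2"
  have m: "m > 2" using rho by (simp add: m_def)
  have m0: "m > 0" using m by simp
  obtain Ca where Ca: "\<forall>t\<in>{0..T}. \<forall>x. norm (a t x) + norm (\<sigma> t x) \<le> Ca * (1 + norm x)"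
    using a_sigma_growth by blast
  define Ca' where "Ca' = max Ca 0"
  have Ca'0: "Ca' \<ge> 0" by (simp add: Ca'_def)
  obtain B where B0: "B \<ge> 0" and HB: "\<forall>x::real^'d. norm (qK K m x) * (Ca'*(1+norm x)) + LK K m x * (Ca'*(1+norm x))^2
       + \<bar>kf\<bar> * ((Ca'*(1+norm x)) * norm (qK K m x)) \<le> B * (1 + hK K m x)"
    using growth_bound[OF K m Ca'0, of kf] by blast
  have vlb: "locally_bounded_on T v" and vlsc: "lsc_on T v" and vT: "\<forall>x. v T x \<ge> \<psi> x"
    using v_super unfolding visc_supersol_def by auto
  show ?thesis
  proof (intro exI[of _ "B + \<bar>kf\<bar> + 1"] conjI allI impI)
    show "0 < B + \<bar>kf\<bar> + 1" using B0 by simp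
    fix vp \<theta> :: real
    assume vp: "B + \<bar>kf\<bar> + 1 < vp" and th: "0 < \<theta>"
    have vp0: "vp > 0" using vp B0 by linarith
    define \<Phi> where "\<Phi> = (\<lambda>s (y::real^'d). \<theta> * exp (- vp * s) * (1 + hK K m y))"
    define W where "W = (\<lambda>s y. v s y + \<Phi> s y)"
    have Weq: "(\<lambda>t x. v t x + \<theta> * exp (- vp * t) * (1 + (max (norm x - K) 0) powr (2 * rr + 2))) = W"
      by (simp add: W_def \<Phi>_def hK_def rK_def m_def)
    have \<Phi>0: "\<And>s y. \<Phi> s y \<ge> 0" using th by (simp add: \<Phi>_def hK_def)
    have wdef: "\<And>s y. W s y = v s y + \<theta> * exp (- vp * s) * (1 + hK K m y)" by (simp add: W_def \<Phi>_def)
    have th0: "\<theta> \<ge> 0" using th by simp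
    have "visc_supersol T U E \<xi> \<gamma> a \<sigma> f \<psi> ell chi W"
      unfolding visc_supersol_def
    proof (intro conjI allI impI)
      show "locally_bounded_on T W"
      proof -
        have LB: "\<exists>r>0. \<exists>Bb. \<forall>s y. (s,y) \<in> pdom T \<and> dist (s,y) (t,x) < r \<longrightarrow> \<bar>W s y\<bar> \<le> Bb"
          if tx: "(t,x) \<in> pdom T" for t x
        proof -
          obtain r Bv where r: "r > 0" and hr: "\<forall>(s,y)\<in>pdom T. dist (s,y) (t,x) < r \<longrightarrow> \<bar>v s y\<bar> \<le> Bv"
            using vlb tx unfolding locally_bounded_on_def by blast
          have "\<forall>s y. (s,y) \<in> pdom T \<and> dist (s,y) (t,x) < min r 1 \<longrightarrow> \<bar>W s y\<bar> \<le> Bv + \<theta> * (1 + (norm x + 1) powr m)"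
          proof (intro allI impI)
            fix s y assume sy: "(s,y) \<in> pdom T \<and> dist (s,y) (t,x) < min r 1"
            have v1: "\<bar>v s y\<bar> \<le> Bv" using hr sy by auto
            have s0: "s \<ge> 0" using sy by (simp add: pdom_def)
            have e1: "exp (- vp * s) \<le> 1" using s0 vp0 by simp
            have "dist y x \<le> dist (s,y) (t,x)" using dist_snd_le[of "(s,y)" "(t,x)"] by simp
            then have yx: "norm (y - x) < 1" using sy by (simp add: dist_norm)
            have "rK K y \<le> norm x + 1"
            proof -
              have "norm y \<le> norm x + norm (y - x)" using norm_triangle_ineq2[of y x] by linarith
              then show ?thesis using yx K norm_ge_zero[of x] unfolding rK_def by linarith
            qed
            then have h1: "hK K m y \<le> (norm x + 1) powr m" unfolding hK_def using m0
              by (intro powr_mono2) (auto simp: rK_def)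
            have "\<Phi> s y \<le> \<theta> * 1 * (1 + (norm x + 1) powr m)"
              unfolding \<Phi>_def using e1 h1 th0 by (intro mult_mono mult_left_mono) (auto simp: hK_def)
            then show "\<bar>W s y\<bar> \<le> Bv + \<theta> * (1 + (norm x + 1) powr m)"
              using v1 \<Phi>0[of s y] unfolding W_def by simp
          qed
          moreover have "min r 1 > 0" using r by simp
          ultimately show ?thesis by blast
        qed
        show ?thesis unfolding locally_bounded_on_def using LB by fastforce
      qed
    next
      show "lsc_on T W"
      proof -
        have hc: "continuous_on UNIV (\<lambda>z::real\<times>(real^'d). hK K m (snd z))"
          by (rule continuous_on_compose2[OF cont_hK[OF m0]]) (auto intro: continuous_intros)
        have pc: "continuous_on UNIV (\<lambda>z::real\<times>(real^'d). \<Phi> (fst z) (snd z))"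
          unfolding \<Phi>_def by (intro continuous_intros hc)
        have LS: "\<exists>r>0. \<forall>s y. (s,y) \<in> pdom T \<and> dist (s,y) (t,x) < r \<longrightarrow> W t x - \<epsilon> < W s y"
          if tx: "(t,x) \<in> pdom T" and e: "\<epsilon> > 0" for t x \<epsilon>
        proof -
          have e2: "\<epsilon>/2 > 0" using e by simp
          obtain r1 where r1: "r1 > 0" and hr1: "\<forall>(s,y)\<in>pdom T. dist (s,y) (t,x) < r1 \<longrightarrow> v t x - \<epsilon>/2 < v s y"
            using vlsc tx e2 unfolding lsc_on_def by blast
          obtain r2 where r2: "r2 > 0" and hr2: "\<forall>z'. dist z' (t,x) < r2 \<longrightarrow>
               dist (\<Phi> (fst z') (snd z')) (\<Phi> (fst (t,x)) (snd (t,x))) < \<epsilon>/2"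
            using pc e2 unfolding continuous_on_iff by blast
          show ?thesis
          proof (intro exI[of _ "min r1 r2"] conjI allI impI)
            show "min r1 r2 > 0" using r1 r2 by simp
            fix s y assume sy: "(s,y) \<in> pdom T \<and> dist (s,y) (t,x) < min r1 r2"
            have a1: "v t x - \<epsilon>/2 < v s y" using hr1 sy by auto
            have "dist (\<Phi> s y) (\<Phi> t x) < \<epsilon>/2" using hr2 sy by fastforce
            then have a2: "\<Phi> t x - \<epsilon>/2 < \<Phi> s y" unfolding dist_real_def by arith
            show "W t x - \<epsilon> < W s y" using a1 a2 unfolding W_def by simp
          qed
        qed
        show ?thesis unfolding lsc_on_def using LS by fastforce
      qed
    next
      fix x show "\<psi> x \<le> W T x" using vT \<Phi>0[of T x] unfolding W_def by (smt (verit))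
    next
      fix t x p q M
      assume H: "0 \<le> t \<and> t < T \<and> (p, q, M) \<in> limsubjet T W t x"
      have t0: "0 \<le> t" and tT: "t < T" and J: "(p, q, M) \<in> limsubjet T W t x" using H by auto
      have tI: "t \<in> {0..T}" using t0 tT by simp
      have tne: "t \<noteq> T" using tT by simp
      define c where "c = \<theta> * exp (- vp * t)"
      define A where "A = 1 + hK K m x"
      define Q where "Q = qK K m x"
      define \<Lambda> where "\<Lambda> = LK K m x"
      have c0: "c > 0" using th by (simp add: c_def)
      have A1: "A \<ge> 1" by (simp add: A_def hK_def)
      have L0: "\<Lambda> \<ge> 0" by (simp add: \<Lambda>_def LK_def)
      have Wtx: "W t x = v t x + c * A" by (simp add: wdef c_def A_def)
      have J': "(p + vp * c * A, q - c *\<^sub>R Q, M - (2 * c * \<Lambda>) *\<^sub>R mat 1) \<in> limsubjet T v t x"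
        using limsubjet_transfer[OF K m th0 wdef J] by (simp add: c_def A_def Q_def \<Lambda>_def mult.assoc)
      define Fv where "Fv = - (p + vp * c * A) - (q - c *\<^sub>R Q) \<bullet> a t x
                         - (1/2) * trace (\<sigma> t x ** transpose (\<sigma> t x) ** (M - (2 * c * \<Lambda>) *\<^sub>R mat 1))
                         - f t x (v t x) (transpose (\<sigma> t x) *v (q - c *\<^sub>R Q))"
      have vin: "min (ereal (v t x) - Mop T U \<xi> ell v t x)
            (max (ereal (v t x) - Hop T E \<gamma> chi v t x) (ereal Fv)) \<ge> 0"
        using v_super t0 tT J' unfolding visc_supersol_def Fv_def by blast
      have Mv: "Mop T U \<xi> ell v t x \<le> ereal (v t x)"
        using vin by (simp add: ereal_diff_nonneg_iff)
      have Mw: "Mop T U \<xi> ell W t x \<le> ereal (W t x)"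
      proof -
        have "(SUP b\<in>U. ereal (W t (x + \<xi> t x b) - ell t x b)) \<le> ereal (v t x + c * A)"
        proof (rule M_lemma)
          show "(SUP b\<in>U. ereal (v t (x + \<xi> t x b) - ell t x b)) \<le> ereal (v t x)"
            using Mv tne by (simp add: Mop_def)
          show "\<forall>b\<in>U. W t (x + \<xi> t x b) - ell t x b \<le> v t (x + \<xi> t x b) - ell t x b + c * A"
          proof
            fix b assume b: "b \<in> U"
            have "hK K m (x + \<xi> t x b) \<le> hK K m x"
              using hK_mono[OF m0] xi_bd tI b by blast
            then have "\<theta> * exp (- vp * t) * (1 + hK K m (x + \<xi> t x b)) \<le> c * A"
              unfolding c_def A_def using th0 by (intro mult_left_mono) auto
            then show "W t (x + \<xi> t x b) - ell t x b \<le> v t (x + \<xi> t x b) - ell t x b + c * A"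
              by (simp add: wdef)
          qed
        qed
        then show ?thesis using tne Wtx by (simp add: Mop_def)
      qed
      have second: "max (ereal (W t x) - Hop T E \<gamma> chi W t x)
           (ereal (- p - q \<bullet> a t x - (1/2) * trace (\<sigma> t x ** transpose (\<sigma> t x) ** M)
                   - f t x (W t x) (transpose (\<sigma> t x) *v q))) \<ge> 0"
      proof (cases "Hop T E \<gamma> chi v t x \<le> ereal (v t x)")
        case True
        have "(INF e\<in>E. ereal (W t (x + \<gamma> t x e) + chi t x e)) \<le> ereal (v t x + c * A)"
        proof (rule H_lemma)
          show "(INF e\<in>E. ereal (v t (x + \<gamma> t x e) + chi t x e)) \<le> ereal (v t x)"
            using True tne by (simp add: Hop_def)
          show "\<forall>e\<in>E. W t (x + \<gamma> t x e) + chi t x e \<le> v t (x + \<gamma> t x e) + chi t x e + c * A"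
          proof
            fix e assume e: "e \<in> E"
            have "hK K m (x + \<gamma> t x e) \<le> hK K m x"
              using hK_mono[OF m0] gamma_bd tI e by blast
            then have "\<theta> * exp (- vp * t) * (1 + hK K m (x + \<gamma> t x e)) \<le> c * A"
              unfolding c_def A_def using th0 by (intro mult_left_mono) auto
            then show "W t (x + \<gamma> t x e) + chi t x e \<le> v t (x + \<gamma> t x e) + chi t x e + c * A"
              by (simp add: wdef)
          qed
        qed
        then have "Hop T E \<gamma> chi W t x \<le> ereal (W t x)" using tne Wtx by (simp add: Hop_def)
        then have "ereal (W t x) - Hop T E \<gamma> chi W t x \<ge> 0" by (simp add: ereal_diff_nonneg_iff)
        then show ?thesis by (simp add: le_max_iff_disj)
      next
        case False
        then have "\<not> (ereal (v t x) - Hop T E \<gamma> chi v t x \<ge> 0)" by (simp add: ereal_diff_nonneg_iff)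
        then have Fv0: "Fv \<ge> 0" using vin by (auto simp: max_def split: if_splits)
        define g where "g = Ca' * (1 + norm x)"
        have nan: "norm (a t x) + norm (\<sigma> t x) \<le> g"
        proof -
          have "Ca * (1 + norm x) \<le> Ca' * (1 + norm x)" unfolding Ca'_def
            by (intro mult_right_mono) auto
          moreover have "norm (a t x) + norm (\<sigma> t x) \<le> Ca * (1 + norm x)" using Ca tI by blast
          ultimately show ?thesis unfolding g_def by linarith
        qed
        have na: "norm (a t x) \<le> g" using nan norm_ge_zero[of "\<sigma> t x"] by linarith
        have ns: "norm (\<sigma> t x) \<le> g" using nan norm_ge_zero[of "a t x"] by linarith
        have HBx: "norm Q * g + \<Lambda> * g^2 + \<bar>kf\<bar> * (g * norm Q) \<le> B * A"
          using HB unfolding Q_def \<Lambda>_def A_def g_def by blast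
        have vpB: "vp \<ge> B + \<bar>kf\<bar>" using vp by simp
        have flip: "\<bar>f t x (W t x) (transpose (\<sigma> t x) *v q) - f t x (v t x) (transpose (\<sigma> t x) *v (q - c *\<^sub>R Q))\<bar>
             \<le> kf * (\<bar>c*A\<bar> + norm (transpose (\<sigma> t x) *v q - transpose (\<sigma> t x) *v (q - c *\<^sub>R Q)))"
        proof -
          have "W t x - v t x = c * A" using Wtx by simp
          moreover have "\<bar>f t x (W t x) (transpose (\<sigma> t x) *v q) - f t x (v t x) (transpose (\<sigma> t x) *v (q - c *\<^sub>R Q))\<bar>
             \<le> kf * (\<bar>W t x - v t x\<bar> + norm (transpose (\<sigma> t x) *v q - transpose (\<sigma> t x) *v (q - c *\<^sub>R Q)))"
            using f_lip tI by blast
          ultimately show ?thesis by simp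
        qed
        have "0 \<le> - p - q \<bullet> a t x - (1/2) * trace (\<sigma> t x ** transpose (\<sigma> t x) ** M)
                   - f t x (W t x) (transpose (\<sigma> t x) *v q)"
          by (rule F_step[OF c0 A1 L0 na ns HBx vpB flip]) (use Fv0 in \<open>simp add: Fv_def\<close>)
        then show ?thesis by (simp add: le_max_iff_disj)
      qed
      have first: "ereal (W t x) - Mop T U \<xi> ell W t x \<ge> 0" using Mw by (simp add: ereal_diff_nonneg_iff)
      show "min (ereal (W t x) - Mop T U \<xi> ell W t x)
            (max (ereal (W t x) - Hop T E \<gamma> chi W t x)
                 (ereal (- p - q \<bullet> a t x - (1/2) * trace (\<sigma> t x ** transpose (\<sigma> t x) ** M)
                         - f t x (W t x) (transpose (\<sigma> t x) *v q)))) \<ge> 0"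
        using first second by simp
    qed
    then show "visc_supersol T U E \<xi> \<gamma> a \<sigma> f \<psi> ell chi
             (\<lambda>t x. v t x + \<theta> * exp (- vp * t) * (1 + (max (norm x - K) 0) powr (2 * rr + 2)))"
      by (simp only: Weq)
  qed
qed

end
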